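(* Assume that the reward class $\mathcal F_{\mathcal P}$ is compact under $\|\cdot\|_{\infty,\mathrm{supp}(\pi_0)}$ and that, for every $R\in\mathcal F_{\mathcal P}$, the map $a\mapsto R(x,a)$ is continuous on $S_x$ for $d_0$-a.e. $x\in\mathcal X$. Then for every truth $p\in\mathcal P$ and every $R\in\mathcal F_{\mathcal P}$, \[ \mathcal L_p(R)=\mathcal L_p(R_p)\quad\Longrightarrow\quad R(x,a)=R_p(x,a)\qquad\forall a\in S_x,\quad d_0\text{-a.e. }x. \] In particular, $\mathcal G_p(R)=0$.
   Context: $\mathcal X$ is a context space with context distribution $d_0$; $\mathcal A$ is a separable metric action space; $\pi_0:\mathcal X\to\Delta(\mathcal A)$ is a reference policy and $S_x:=\mathrm{supp}(\pi_0(\cdot\mid x))$ is the topological support; $\|R\|_{\infty,\mathrm{supp}(\pi_0)}$ is the supremum of $|R(x,a)|$ over pairs with $a\in S_x$. $\mathcal P$ is a compact class of truths; each $p\in\mathcal P$ induces a $\pi_0$-centered measurable reward $R_p:\mathcal X\times\mathcal A\to\mathbb R$ (i.e. $\mathbb E_{a\sim\pi_0(\cdot\mid x)}[R_p(x,a)]=0$), and $\mathcal F_{\mathcal P}:=\{R_p:p\in\mathcal P\}$. For a slate $\mathbf a=(a_1,\dots,a_K)$, $K\ge2$, the MNL choice model is $P_R(y=k\mid x,\mathbf a)=e^{R(x,a_k)}/\sum_{\ell=1}^K e^{R(x,a_\ell)}$, and the log-loss is $\ell(\mathbf v,y)=\log\sum_{k=1}^K e^{v_k}-v_y$. The truth-centered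 population loss is $\mathcal L_p(R):=\mathbb E[\ell(\mathbf v_R,Y)]$ where $X\sim d_0$, $\mathbf A=(A_1,\dots,A_K)\sim\pi_0(\cdot\mid X)^{\otimes K}$, $Y\sim P_{R_p}(\cdot\mid X,\mathbf A)$, and $\mathbf v_R=(R(X,A_1),\dots,R(X,A_K))$. For a centered reward $R$, $a_R(x)$ is a measurable selector in $\arg\max_{a\in S_x}R(x,a)$ under a fixed common measurable tie-breaking rule, $a_p:=a_{R_p}$, and the temperature-zero regret is $\mathcal G_p(R):=\mathbb E_{X\sim d_0}[R_p(X,a_p(X))-R_p(X,a_R(X))]$. *)

theory Defs
  imports "HOL-Probability.Probability"
begin

definition topsupp :: "'a::topological_space measure \<Rightarrow> 'a set" where
  "topsupp \<mu> = {a. \<forall>U. open U \<and> a \<in> U \<longrightarrow> emeasure \<mu> U > 0}"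

definition supp_pairs :: "'x measure \<Rightarrow> ('x \<Rightarrow> 'a::topological_space measure) \<Rightarrow> ('x \<times> 'a) set" where
  "supp_pairs d0 \<pi>0 = {(x, a). x \<in> space d0 \<and> a \<in> topsupp (\<pi>0 x)}"

definition supp_norm :: "'x measure \<Rightarrow> ('x \<Rightarrow> 'a::topological_space measure) \<Rightarrow> ('x \<Rightarrow> 'a \<Rightarrow> real) \<Rightarrow> real" where
  "supp_norm d0 \<pi>0 R = (SUP xa \<in> supp_pairs d0 \<pi>0. \<bar>R (fst xa) (snd xa)\<bar>)"

definition bounded_on_supp :: "'x measure \<Rightarrow> ('x \<Rightarrow> 'a::topological_space measure) \<Rightarrow> ('x \<Rightarrow> 'a \<Rightarrow> real) \<Rightarrow> bool" where
  "bounded_on_supp d0 \<pi>0 R \<longleftrightarrow> bdd_above ((\<lambda>xa. \<bar>R (fst xa) (snd xa)\<bar>) ` supp_pairs d0 \<pi>0)"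

text \<open>Compactness of a class of rewards w.r.t. the (pseudo)norm supp_norm: all members have
  finite norm and the class is sequentially compact (equivalent to compactness in a pseudometric space).\<close>
definition compact_supp :: "'x measure \<Rightarrow> ('x \<Rightarrow> 'a::topological_space measure) \<Rightarrow> ('x \<Rightarrow> 'a \<Rightarrow> real) set \<Rightarrow> bool" where
  "compact_supp d0 \<pi>0 F \<longleftrightarrow>
     (\<forall>R\<in>F. bounded_on_supp d0 \<pi>0 R) \<and>
     (\<forall>f::nat \<Rightarrow> 'x \<Rightarrow> 'a \<Rightarrow> real. (\<forall>n. f n \<in> F) \<longrightarrow>
        (\<exists>r R. strict_mono r \<and> R \<in> F \<and>
           (\<lambda>n. supp_norm d0 \<pi>0 (\<lambda>x a. f (r n) x a - R x a)) \<longlonglongrightarrow> 0))"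

text \<open>MNL choice probabilities for a slate as : nat => 'a (entries 0..K-1).\<close>
definition mnl :: "nat \<Rightarrow> ('x \<Rightarrow> 'a \<Rightarrow> real) \<Rightarrow> 'x \<Rightarrow> (nat \<Rightarrow> 'a) \<Rightarrow> nat \<Rightarrow> real" where
  "mnl K R x as k = exp (R x (as k)) / (\<Sum>l<K. exp (R x (as l)))"

definition logloss :: "nat \<Rightarrow> (nat \<Rightarrow> real) \<Rightarrow> nat \<Rightarrow> real" where
  "logloss K v y = ln (\<Sum>k<K. exp (v k)) - v y"

text \<open>Truth-centered population loss L_p(R), with Y ~ P_{R_p} integrated out explicitly.\<close>
definition pop_loss :: "nat \<Rightarrow> 'x measure \<Rightarrow> ('x \<Rightarrow> 'a measure) \<Rightarrow> ('x \<Rightarrow> 'a \<Rightarrow> real)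
                        \<Rightarrow> ('x \<Rightarrow> 'a \<Rightarrow> real) \<Rightarrow> real" where
  "pop_loss K d0 \<pi>0 Rp R =
     (\<integral>x. (\<integral>as. (\<Sum>k<K. mnl K Rp x as k * logloss K (\<lambda>j. R x (as j)) k)
               \<partial>(PiM {..<K} (\<lambda>_. \<pi>0 x))) \<partial>d0)"

definition argmax_supp :: "('x \<Rightarrow> 'a::topological_space measure) \<Rightarrow> ('x \<Rightarrow> 'a \<Rightarrow> real) \<Rightarrow> 'x \<Rightarrow> 'a set" where
  "argmax_supp \<pi>0 R x = {a \<in> topsupp (\<pi>0 x). \<forall>b \<in> topsupp (\<pi>0 x). R x b \<le> R x a}"

text \<open>Selector a_R(x) under a fixed common tie-breaking rule tb (tb chooses an element of a set).\<close>
definition sel :: "('a set \<Rightarrow> 'a) \<Rightarrow> ('x \<Rightarrow> 'a::topological_space measure) \<Rightarrow> ('x \<Rightarrow> 'a \<Rightarrow> real) \<Rightarrow> 'x \<Rightarrow> 'a" where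
  "sel tb \<pi>0 R x = tb (argmax_supp \<pi>0 R x)"

definition regret :: "('a set \<Rightarrow> 'a) \<Rightarrow> 'x measure \<Rightarrow> ('x \<Rightarrow> 'a::topological_space measure)
                      \<Rightarrow> ('x \<Rightarrow> 'a \<Rightarrow> real) \<Rightarrow> ('x \<Rightarrow> 'a \<Rightarrow> real) \<Rightarrow> real" where
  "regret tb d0 \<pi>0 Rp R = (\<integral>x. Rp x (sel tb \<pi>0 Rp x) - Rp x (sel tb \<pi>0 R x) \<partial>d0)"

end

theory Submission
  imports Defs
begin


lemma gibbs_term:
  fixes p q :: real assumes "p > 0" "q > 0"
  shows "p * (ln p - ln q) \<ge> p - q"
    and "p * (ln p - ln q) = p - q \<Longrightarrow> q = p"
proof -
  have t: "q / p > 0" using assms by simp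
  have e: "ln (q / p) = ln q - ln p" using assms by (simp add: ln_div)
  have "ln (q/p) \<le> q/p - 1" using ln_le_minus_one[OF t] .
  then have "p * ln (q/p) \<le> p * (q/p - 1)" using assms by (intro mult_left_mono) auto
  also have "p * (q/p - 1) = q - p" using assms by (simp add: field_simps)
  finally show "p * (ln p - ln q) \<ge> p - q" using e by (simp add: algebra_simps)
  assume "p * (ln p - ln q) = p - q"
  then have "p * ln (q/p) = q - p" unfolding e by (simp add: right_diff_distrib)
  also have "q - p = p * (q/p - 1)" using assms by (simp add: field_simps)
  finally have "p * ln (q/p) = p * (q/p - 1)" .
  then have "ln (q/p) = q/p - 1" using assms by simp
  then have "q/p = 1" using ln_eq_minus_one[OF t] by blast
  then show "q = p" using assms by simp
qed

lemma gibbs: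
  fixes u v :: "nat \<Rightarrow> real" and K :: nat
  assumes K: "K > 0"
  defines "gap \<equiv> (\<Sum>k<K. (exp (u k) / (\<Sum>l<K. exp (u l))) * logloss K v k)
                - (\<Sum>k<K. (exp (u k) / (\<Sum>l<K. exp (u l))) * logloss K u k)"
  shows "gap \<ge> 0" and "gap = 0 \<Longrightarrow> k < K \<Longrightarrow> v k - u k = v 0 - u 0"
proof -
  define Su where "Su = (\<Sum>l<K. exp (u l))"
  define Sv where "Sv = (\<Sum>l<K. exp (v l))"
  have Su: "Su > 0" unfolding Su_def using K by (intro sum_pos) auto
  have Sv: "Sv > 0" unfolding Sv_def using K by (intro sum_pos) auto
  define p where "p k = exp (u k) / Su" for k
  define q where "q k = exp (v k) / Sv" for k
  have pp: "p k > 0" for k using Su by (simp add: p_def)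
  have qp: "q k > 0" for k using Sv by (simp add: q_def)
  have lp: "ln (p k) = u k - ln Su" for k using Su by (simp add: p_def ln_div)
  have lq: "ln (q k) = v k - ln Sv" for k using Sv by (simp add: q_def ln_div)
  have sp: "(\<Sum>k<K. p k) = 1" using Su by (simp add: p_def Su_def flip: sum_divide_distrib)
  have sq: "(\<Sum>k<K. q k) = 1" using Sv by (simp add: q_def Sv_def flip: sum_divide_distrib)
  have g: "gap = (\<Sum>k<K. p k * (ln (p k) - ln (q k)))"
    unfolding gap_def p_def[symmetric, unfolded Su_def] logloss_def
    by (simp add: lp lq Sv_def Su_def sum_subtractf[symmetric] algebra_simps)
  have ge: "p k * (ln (p k) - ln (q k)) - (p k - q k) \<ge> 0" for k
    using gibbs_term(1)[OF pp qp, of k k] by simp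
  have "gap - 0 = (\<Sum>k<K. p k * (ln (p k) - ln (q k)) - (p k - q k))"
    using sp sq by (simp add: g sum_subtractf)
  then have gs: "gap = (\<Sum>k<K. p k * (ln (p k) - ln (q k)) - (p k - q k))" by simp
  show "gap \<ge> 0" unfolding gs using ge by (intro sum_nonneg) auto
  assume "gap = 0" and k: "k < K"
  then have "\<forall>j\<in>{..<K}. p j * (ln (p j) - ln (q j)) - (p j - q j) = 0"
    using gs ge by (subst sum_nonneg_eq_0_iff[symmetric]) auto
  then have eq: "j < K \<Longrightarrow> q j = p j" for j using gibbs_term(2)[OF pp qp, of j j] by auto
  have "ln (q k) = ln (p k)" "ln (q 0) = ln (p 0)" using eq k K by auto
  then show "v k - u k = v 0 - u 0" using lp lq by (simp add: algebra_simps)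
qed



lemma topsupp_AE:
  fixes \<mu> :: "'a::{metric_space,second_countable_topology} measure"
  assumes S: "sets \<mu> = sets borel"
  shows "AE a in \<mu>. a \<in> topsupp \<mu>"
proof -
  define F where "F = {U. open U \<and> emeasure \<mu> U = 0}"
  obtain F' where F': "F' \<subseteq> F" "countable F'" "\<Union>F' = \<Union>F"
    using Lindelof_openin[of F UNIV] unfolding F_def by (auto simp: subtopology_UNIV)
  have "(\<Union>U\<in>F'. U) \<in> null_sets \<mu>"
    using F' by (intro null_sets_UN') (auto simp: F_def null_sets_def S)
  then have "\<Union>F' \<in> null_sets \<mu>" by simp
  moreover have "{a \<in> space \<mu>. a \<notin> topsupp \<mu>} \<subseteq> \<Union>F'"
    unfolding F'(3) by (auto simp: topsupp_def F_def not_less)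
  ultimately show ?thesis by (rule AE_I')
qed

lemma kernel_PiM:
  fixes \<pi>0 :: "'x \<Rightarrow> 'a measure" and K :: nat
  assumes pi0_prob: "\<And>x. x \<in> space d0 \<Longrightarrow> prob_space (\<pi>0 x)"
    and pi0_sets: "\<And>x. x \<in> space d0 \<Longrightarrow> sets (\<pi>0 x) = sets N"
    and pi0_meas: "\<pi>0 \<in> measurable d0 (subprob_algebra N)"
  shows "(\<lambda>x. PiM {..<K} (\<lambda>_. \<pi>0 x)) \<in> measurable d0 (subprob_algebra (PiM {..<K} (\<lambda>_. N)))"
proof (rule measurable_subprob_algebra_generated[OF sets_PiM Int_stable_prod_algebra prod_algebra_sets_into_space])
  fix x assume x: "x \<in> space d0"
  interpret P: product_prob_space "\<lambda>_. \<pi>0 x" "{..<K}" using pi0_prob[OF x] 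
    by (simp add: product_prob_space_def product_sigma_finite_def prob_space_imp_sigma_finite product_prob_space_axioms_def)
  show "subprob_space (PiM {..<K} (\<lambda>_. \<pi>0 x))" by (rule P.P.subprob_space_axioms)
  show "sets (PiM {..<K} (\<lambda>_. \<pi>0 x)) = sets (PiM {..<K} (\<lambda>_. N))"
    using pi0_sets[OF x] by (intro sets_PiM_cong) auto
next
  fix A assume A: "A \<in> prod_algebra {..<K} (\<lambda>_. N)"
  then obtain E where E: "A = Pi\<^sub>E {..<K} E" "E \<in> (\<Pi> i\<in>{..<K}. sets N)"
    by (rule prod_algebraE_all)
  have "(\<lambda>x. \<Prod>i\<in>{..<K}. emeasure (\<pi>0 x) (E i)) \<in> borel_measurable d0"
    using E(2) by (intro borel_measurable_prod_ennreal measurable_compose[OF pi0_meas measurable_emeasure_subprob_algebra]) auto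
  then show "(\<lambda>x. emeasure (PiM {..<K} (\<lambda>_. \<pi>0 x)) A) \<in> borel_measurable d0"
  proof (rule measurable_cong[THEN iffD1, rotated])
    fix x assume x: "x \<in> space d0"
    interpret P: product_prob_space "\<lambda>_. \<pi>0 x" "{..<K}" using pi0_prob[OF x] 
      by (simp add: product_prob_space_def product_sigma_finite_def prob_space_imp_sigma_finite product_prob_space_axioms_def)
    show "(\<Prod>i\<in>{..<K}. emeasure (\<pi>0 x) (E i)) = emeasure (PiM {..<K} (\<lambda>_. \<pi>0 x)) A"
      unfolding E(1) using E(2) pi0_sets[OF x] by (intro P.emeasure_PiM[symmetric]) (auto simp: Pi_iff)
  qed
next
  show "(\<lambda>x. emeasure (PiM {..<K} (\<lambda>_. \<pi>0 x)) (\<Pi>\<^sub>E i\<in>{..<K}. space N)) \<in> borel_measurable d0"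
  proof (rule measurable_cong[THEN iffD1, rotated])
    fix x assume x: "x \<in> space d0"
    interpret P: product_prob_space "\<lambda>_. \<pi>0 x" "{..<K}" using pi0_prob[OF x] 
      by (simp add: product_prob_space_def product_sigma_finite_def prob_space_imp_sigma_finite product_prob_space_axioms_def)
    have "space N = space (\<pi>0 x)" using pi0_sets[OF x] by (metis sets_eq_imp_space_eq)
    then show "1 = emeasure (PiM {..<K} (\<lambda>_. \<pi>0 x)) (\<Pi>\<^sub>E i\<in>{..<K}. space N)"
      using P.P.emeasure_space_1 by (simp add: space_PiM)
  qed simp
qed



lemma fiber:
  fixes \<mu> :: "'a::{metric_space,second_countable_topology} measure" and R Rp :: "'a \<Rightarrow> real"
    and K :: nat
  assumes mu: "prob_space \<mu>" and S: "sets \<mu> = sets borel"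
    and Rm: "R \<in> borel_measurable borel" and Rpm: "Rp \<in> borel_measurable borel"
    and bnd: "\<And>a. a \<in> topsupp \<mu> \<Longrightarrow> \<bar>R a\<bar> \<le> B \<and> \<bar>Rp a\<bar> \<le> B"
    and c1: "(\<integral>a. R a \<partial>\<mu>) = 0" and c2: "(\<integral>a. Rp a \<partial>\<mu>) = 0"
    and ct1: "continuous_on (topsupp \<mu>) R" and ct2: "continuous_on (topsupp \<mu>) Rp"
    and K2: "K \<ge> 2"
    and ae: "AE as in PiM {..<K} (\<lambda>_. \<mu>). R (as 1) - Rp (as 1) = R (as 0) - Rp (as 0)"
  shows "\<forall>a\<in>topsupp \<mu>. R a = Rp a"
proof -
  interpret mu: prob_space \<mu> by fact
  interpret P: product_prob_space "\<lambda>_. \<mu>" "{..<K}"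
    using mu by (simp add: product_prob_space_def product_sigma_finite_def prob_space_imp_sigma_finite product_prob_space_axioms_def)
  define D where "D a = R a - Rp a" for a
  have Rm': "R \<in> borel_measurable \<mu>" and Rpm': "Rp \<in> borel_measurable \<mu>"
    using Rm Rpm measurable_cong_sets[OF S refl] by auto
  have Dm[measurable]: "D \<in> borel_measurable \<mu>" unfolding D_def using Rm' Rpm' by measurable
  have sup: "AE a in \<mu>. a \<in> topsupp \<mu>" by (rule topsupp_AE[OF S])
  have iR: "integrable \<mu> R"
    by (rule mu.integrable_const_bound[where B=B]) (use sup bnd Rm' in auto)
  have iRp: "integrable \<mu> Rp"
    by (rule mu.integrable_const_bound[where B=B]) (use sup bnd Rpm' in auto)
  have iD: "integrable \<mu> D" unfolding D_def using iR iRp by auto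
  have iD2: "integrable \<mu> (\<lambda>a. D a ^ 2)"
  proof (rule mu.integrable_const_bound[where B="(2*B)^2"])
    show "AE a in \<mu>. norm (D a ^ 2) \<le> (2*B)^2"
      using sup
    proof eventually_elim
      case (elim a)
      then have "\<bar>D a\<bar> \<le> 2*B" using bnd[of a] by (auto simp: D_def)
      then have "\<bar>D a\<bar> ^ 2 \<le> (2*B)^2" by (intro power_mono) auto
      then show ?case by simp
    qed
  qed measurable
  have intD: "(\<integral>a. D a \<partial>\<mu>) = 0" unfolding D_def using iR iRp c1 c2 by simp
  have fin: "finite {..<K}" by simp
  have s01: "{..<K} \<inter> {0,1} = {0,1::nat}" using K2 by auto
  have s0: "{..<K} \<inter> {0} = {0::nat}" using K2 by auto
  define f1 where "f1 i = (if i \<in> {0::nat} then (\<lambda>a. D a ^ 2) else (\<lambda>_. 1))" for i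
  define f2 where "f2 i = (if i \<in> {0::nat,1} then D else (\<lambda>_. 1))" for i
  have e1: "(\<integral>as. (\<Prod>i\<in>{..<K}. f1 i (as i)) \<partial>PiM {..<K} (\<lambda>_. \<mu>)) = (\<Prod>i\<in>{..<K}. integral\<^sup>L \<mu> (f1 i))"
    by (rule P.product_integral_prod) (auto simp: f1_def iD2)
  have e2: "(\<integral>as. (\<Prod>i\<in>{..<K}. f2 i (as i)) \<partial>PiM {..<K} (\<lambda>_. \<mu>)) = (\<Prod>i\<in>{..<K}. integral\<^sup>L \<mu> (f2 i))"
    by (rule P.product_integral_prod) (auto simp: f2_def iD)
  have p1: "(\<Prod>i\<in>{..<K}. f1 i (as i)) = D (as 0) ^ 2" for as
  proof -
    have "(\<Prod>i\<in>{..<K}. f1 i (as i)) = (\<Prod>i\<in>{..<K}. if i \<in> {0} then D (as i) ^ 2 else 1)"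
      by (intro prod.cong) (auto simp: f1_def)
    also have "\<dots> = (\<Prod>i\<in>{..<K} \<inter> {0}. D (as i) ^ 2)" by (rule prod.inter_restrict[symmetric]) simp
    finally show ?thesis using s0 by simp
  qed
  have p2: "(\<Prod>i\<in>{..<K}. f2 i (as i)) = D (as 0) * D (as 1)" for as
  proof -
    have "(\<Prod>i\<in>{..<K}. f2 i (as i)) = (\<Prod>i\<in>{..<K}. if i \<in> {0,1} then D (as i) else 1)"
      by (intro prod.cong) (auto simp: f2_def)
    also have "\<dots> = (\<Prod>i\<in>{..<K} \<inter> {0,1}. D (as i))" by (rule prod.inter_restrict[symmetric]) simp
    finally show ?thesis using s01 by simp
  qed
  have q1: "(\<Prod>i\<in>{..<K}. integral\<^sup>L \<mu> (f1 i)) = (\<integral>a. D a ^ 2 \<partial>\<mu>)"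
  proof -
    have "(\<Prod>i\<in>{..<K}. integral\<^sup>L \<mu> (f1 i)) = (\<Prod>i\<in>{..<K}. if i \<in> {0} then (\<integral>a. D a ^ 2 \<partial>\<mu>) else 1)"
      by (intro prod.cong) (auto simp: f1_def mu.prob_space)
    also have "\<dots> = (\<Prod>i\<in>{..<K} \<inter> {0}. (\<integral>a. D a ^ 2 \<partial>\<mu>))" by (rule prod.inter_restrict[symmetric]) simp
    finally show ?thesis using s0 by simp
  qed
  have q2: "(\<Prod>i\<in>{..<K}. integral\<^sup>L \<mu> (f2 i)) = 0"
  proof -
    have "(\<Prod>i\<in>{..<K}. integral\<^sup>L \<mu> (f2 i)) = (\<Prod>i\<in>{..<K}. if i \<in> {0,1} then (\<integral>a. D a \<partial>\<mu>) else 1)"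
      by (intro prod.cong) (auto simp: f2_def mu.prob_space)
    also have "\<dots> = (\<Prod>i\<in>{..<K} \<inter> {0,1}. (\<integral>a. D a \<partial>\<mu>))" by (rule prod.inter_restrict[symmetric]) simp
    finally show ?thesis using s01 intD by simp
  qed
  have sPi: "sets (PiM {..<K} (\<lambda>_. \<mu>)) = sets (PiM {..<K} (\<lambda>_. borel))"
    using S by (intro sets_PiM_cong) auto
  have Dm2: "D \<in> borel_measurable borel" unfolding D_def using Rm Rpm by measurable
  have m0: "(\<lambda>as. D (as i)) \<in> borel_measurable (PiM {..<K} (\<lambda>_. \<mu>))" if "i < K" for i
    using measurable_compose[OF measurable_component_singleton[of i "{..<K}" "\<lambda>_. \<mu>"] Dm] that by simp
  have "(\<integral>as. D (as 0) ^ 2 \<partial>PiM {..<K} (\<lambda>_. \<mu>)) = (\<integral>as. D (as 0) * D (as 1) \<partial>PiM {..<K} (\<lambda>_. \<mu>))"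
  proof (rule integral_cong_AE)
    have [measurable]: "(\<lambda>as. D (as 0)) \<in> borel_measurable (PiM {..<K} (\<lambda>_. \<mu>))"
      "(\<lambda>as. D (as 1)) \<in> borel_measurable (PiM {..<K} (\<lambda>_. \<mu>))" using m0[of 0] m0[of 1] K2 by auto
    show "(\<lambda>as. D (as 0) ^ 2) \<in> borel_measurable (PiM {..<K} (\<lambda>_. \<mu>))" by measurable
    show "(\<lambda>as. D (as 0) * D (as 1)) \<in> borel_measurable (PiM {..<K} (\<lambda>_. \<mu>))" by measurable
    show "AE as in PiM {..<K} (\<lambda>_. \<mu>). D (as 0) ^ 2 = D (as 0) * D (as 1)"
      using ae by eventually_elim (simp add: D_def power2_eq_square)
  qed
  then have "(\<integral>a. D a ^ 2 \<partial>\<mu>) = 0" using e1 e2 p1 p2 q1 q2 by simp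
  then have "AE a in \<mu>. D a ^ 2 = 0"
    using integral_nonneg_eq_0_iff_AE[OF iD2] by auto
  then have D0: "AE a in \<mu>. a \<in> topsupp \<mu> \<longrightarrow> D a = 0" by eventually_elim simp
  have ctD: "continuous_on (topsupp \<mu>) D" unfolding D_def using ct1 ct2 by (intro continuous_intros)
  show ?thesis
  proof (rule ccontr)
    assume "\<not> ?thesis"
    then obtain a where a: "a \<in> topsupp \<mu>" "D a \<noteq> 0" by (auto simp: D_def)
    then obtain d where d: "d > 0" "\<And>b. b \<in> topsupp \<mu> \<Longrightarrow> dist b a < d \<Longrightarrow> dist (D b) (D a) < \<bar>D a\<bar>"
      using ctD unfolding continuous_on_iff by (metis zero_less_abs_iff)
    have "AE b in \<mu>. b \<notin> ball a d"
      using D0 sup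
    proof eventually_elim
      case (elim b)
      show ?case
      proof
        assume "b \<in> ball a d"
        then have "dist b a < d" by (simp add: dist_commute)
        then have "dist (D b) (D a) < \<bar>D a\<bar>" using d elim by blast
        then show False using elim by (simp add: dist_real_def)
      qed
    qed
    moreover have bd: "{b \<in> space \<mu>. \<not> b \<notin> ball a d} = ball a d"
      using sets_eq_imp_space_eq[OF S] by auto
    ultimately have "{b \<in> space \<mu>. \<not> b \<notin> ball a d} \<in> null_sets \<mu>"
      by (subst AE_iff_null[symmetric]) (auto simp: S bd)
    then have "emeasure \<mu> (ball a d) = 0" unfolding bd by auto
    moreover have "emeasure \<mu> (ball a d) > 0" using a(1) d(1) by (auto simp: topsupp_def)
    ultimately show False by simp
  qed
qed



lemma logloss_bound:
  fixes v :: "nat \<Rightarrow> real" and K :: nat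
  assumes K: "k < K" and b: "\<And>j. j < K \<Longrightarrow> \<bar>v j\<bar> \<le> B"
  shows "0 \<le> logloss K v k" "logloss K v k \<le> ln K + 2 * B"
proof -
  define S where "S = (\<Sum>l<K. exp (v l))"
  have "exp (v k) \<le> S" unfolding S_def using K by (intro member_le_sum) auto
  then have "v k \<le> ln S" by (metis exp_gt_zero ln_exp ln_le_cancel_iff order_less_le_trans)
  then show "0 \<le> logloss K v k" by (simp add: logloss_def S_def)
  have "S \<le> (\<Sum>l<K. exp B)" unfolding S_def using b by (intro sum_mono) (auto simp: abs_le_iff)
  then have Sl: "S \<le> K * exp B" by simp
  have Sp: "S > 0" unfolding S_def using K by (intro sum_pos) auto
  have "ln S \<le> ln (K * exp B)" using Sl Sp by simp
  also have "\<dots> = ln K + B" using K by (simp add: ln_mult)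
  finally show "logloss K v k \<le> ln K + 2 * B" using b[OF K] by (simp add: logloss_def S_def)
qed

lemma h_bound:
  fixes u v :: "nat \<Rightarrow> real" and K :: nat
  assumes K: "K > 0" and b: "\<And>j. j < K \<Longrightarrow> \<bar>v j\<bar> \<le> B"
  shows "0 \<le> (\<Sum>k<K. (exp (u k) / (\<Sum>l<K. exp (u l))) * logloss K v k)"
    and "(\<Sum>k<K. (exp (u k) / (\<Sum>l<K. exp (u l))) * logloss K v k) \<le> ln K + 2 * B"
proof -
  define S where "S = (\<Sum>l<K. exp (u l))"
  have Sp: "S > 0" unfolding S_def using K by (intro sum_pos) auto
  show "0 \<le> (\<Sum>k<K. (exp (u k) / (\<Sum>l<K. exp (u l))) * logloss K v k)"
    using logloss_bound(1)[OF _ b] Sp unfolding S_def[symmetric] by (intro sum_nonneg mult_nonneg_nonneg) auto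
  have "(\<Sum>k<K. (exp (u k) / S) * logloss K v k) \<le> (\<Sum>k<K. (exp (u k) / S) * (ln K + 2 * B))"
    using logloss_bound(2)[OF _ b] Sp by (intro sum_mono mult_left_mono) auto
  also have "\<dots> = ln K + 2 * B" using Sp by (simp add: S_def flip: sum_distrib_right sum_divide_distrib)
  finally show "(\<Sum>k<K. (exp (u k) / (\<Sum>l<K. exp (u l))) * logloss K v k) \<le> ln K + 2 * B"
    unfolding S_def .
qed

lemma integral_kernel_measurable:
  fixes f :: "'x \<Rightarrow> 'b \<Rightarrow> real"
  assumes f[measurable]: "(\<lambda>(x, y). f x y) \<in> borel_measurable (M \<Otimes>\<^sub>M N)"
    and L[measurable]: "L \<in> measurable M (subprob_algebra N)"
    and int: "\<And>x. x \<in> space M \<Longrightarrow> integrable (L x) (f x)"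
  shows "(\<lambda>x. \<integral>y. f x y \<partial>L x) \<in> borel_measurable M"
proof -
  have f1: "(\<lambda>(x, y). ennreal (f x y)) \<in> borel_measurable (M \<Otimes>\<^sub>M N)" by measurable
  have f2: "(\<lambda>(x, y). ennreal (- f x y)) \<in> borel_measurable (M \<Otimes>\<^sub>M N)" by measurable
  have "(\<lambda>x. enn2real (\<integral>\<^sup>+y. ennreal (f x y) \<partial>L x) - enn2real (\<integral>\<^sup>+y. ennreal (- f x y) \<partial>L x)) \<in> borel_measurable M"
    using nn_integral_measurable_subprob_algebra2[OF f1 L] nn_integral_measurable_subprob_algebra2[OF f2 L]
    by measurable
  then show ?thesis
    by (rule measurable_cong[THEN iffD1, rotated]) (simp add: real_lebesgue_integral_def[OF int])
qed



lemma joint_meas: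
  fixes S :: "'x \<Rightarrow> 'a::topological_space \<Rightarrow> real" and K :: nat
  assumes Sm: "(\<lambda>(x, a). S x a) \<in> borel_measurable (d0 \<Otimes>\<^sub>M borel)"
  shows "(\<lambda>z. S (fst z) (snd z j)) \<in> borel_measurable (d0 \<Otimes>\<^sub>M PiM {..<K} (\<lambda>_. borel))"
proof (cases "j < K")
  case True
  have "(\<lambda>z. (fst z, snd z j)) \<in> measurable (d0 \<Otimes>\<^sub>M PiM {..<K} (\<lambda>_. borel)) (d0 \<Otimes>\<^sub>M borel)"
    apply measurable using True by simp
  from measurable_compose[OF this Sm] show ?thesis by simp
next
  case False
  have "(\<lambda>z. S (fst z) undefined) \<in> borel_measurable (d0 \<Otimes>\<^sub>M PiM {..<K} (\<lambda>_. borel))"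
  proof -
    have "(\<lambda>z. (fst z, undefined)) \<in> measurable (d0 \<Otimes>\<^sub>M PiM {..<K} (\<lambda>_. borel)) (d0 \<Otimes>\<^sub>M borel)"
      by measurable
    from measurable_compose[OF this Sm] show ?thesis by simp
  qed
  then show ?thesis
    by (rule measurable_cong[THEN iffD1, rotated]) (use False in \<open>auto simp: space_pair_measure space_PiM PiE_def extensional_def\<close>)
qed

lemma h_meas:
  fixes S Rp :: "'x \<Rightarrow> 'a::topological_space \<Rightarrow> real" and K :: nat
  assumes Sm: "(\<lambda>(x, a). S x a) \<in> borel_measurable (d0 \<Otimes>\<^sub>M borel)"
    and Rpm: "(\<lambda>(x, a). Rp x a) \<in> borel_measurable (d0 \<Otimes>\<^sub>M borel)"
  shows "(\<lambda>(x, as). \<Sum>k<K. mnl K Rp x as k * logloss K (\<lambda>j. S x (as j)) k)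
          \<in> borel_measurable (d0 \<Otimes>\<^sub>M PiM {..<K} (\<lambda>_. borel))"
proof -
  note [measurable] = joint_meas[OF Sm, of _ K] joint_meas[OF Rpm, of _ K]
  have "(\<lambda>z. \<Sum>k<K. mnl K Rp (fst z) (snd z) k * logloss K (\<lambda>j. S (fst z) (snd z j)) k)
          \<in> borel_measurable (d0 \<Otimes>\<^sub>M PiM {..<K} (\<lambda>_. borel))"
    unfolding mnl_def logloss_def by measurable
  then show ?thesis by (simp add: case_prod_beta')
qed



theorem lemma2:
  fixes K :: nat
    and d0 :: "'x measure"
    and \<pi>0 :: "'x \<Rightarrow> ('a::{metric_space, second_countable_topology}) measure"
    and P :: "'p set"
    and Rf :: "'p \<Rightarrow> 'x \<Rightarrow> 'a \<Rightarrow> real"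
    and tb :: "'a set \<Rightarrow> 'a"
    and p :: 'p and R :: "'x \<Rightarrow> 'a \<Rightarrow> real"
  assumes K2: "K \<ge> 2"
    and d0_prob: "prob_space d0"
    and pi0_prob: "\<And>x. x \<in> space d0 \<Longrightarrow> prob_space (\<pi>0 x)"
    and pi0_sets: "\<And>x. x \<in> space d0 \<Longrightarrow> sets (\<pi>0 x) = sets borel"
    and pi0_meas: "\<pi>0 \<in> measurable d0 (subprob_algebra borel)"
    and tb_sel: "\<And>B. B \<noteq> {} \<Longrightarrow> tb B \<in> B"
    and R_meas: "\<And>q. q \<in> P \<Longrightarrow> (\<lambda>(x, a). Rf q x a) \<in> borel_measurable (d0 \<Otimes>\<^sub>M borel)"
    and R_centered: "\<And>q x. q \<in> P \<Longrightarrow> x \<in> space d0 \<Longrightarrow> (\<integral>a. Rf q x a \<partial>(\<pi>0 x)) = 0"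
    and F_compact: "compact_supp d0 \<pi>0 (Rf ` P)"
    and F_cont: "\<And>S. S \<in> Rf ` P \<Longrightarrow> AE x in d0. continuous_on (topsupp (\<pi>0 x)) (S x)"
    and p_in: "p \<in> P"
    and R_in: "R \<in> Rf ` P"
    and loss_eq: "pop_loss K d0 \<pi>0 (Rf p) R = pop_loss K d0 \<pi>0 (Rf p) (Rf p)"
  shows "(AE x in d0. \<forall>a \<in> topsupp (\<pi>0 x). R x a = Rf p x a) \<and> regret tb d0 \<pi>0 (Rf p) R = 0"
proof -
  interpret d0: prob_space d0 by (rule d0_prob)
  obtain q where q: "q \<in> P" "R = Rf q" using R_in by auto
  define Rp where "Rp = Rf p"
  have Rm: "(\<lambda>(x, a). R x a) \<in> borel_measurable (d0 \<Otimes>\<^sub>M borel)" using R_meas q by simp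
  have Rpm: "(\<lambda>(x, a). Rp x a) \<in> borel_measurable (d0 \<Otimes>\<^sub>M borel)" using R_meas p_in by (simp add: Rp_def)
  have cR: "\<And>x. x \<in> space d0 \<Longrightarrow> (\<integral>a. R x a \<partial>(\<pi>0 x)) = 0" using R_centered q by simp
  have cRp: "\<And>x. x \<in> space d0 \<Longrightarrow> (\<integral>a. Rp x a \<partial>(\<pi>0 x)) = 0" using R_centered p_in by (simp add: Rp_def)
  have bR: "bounded_on_supp d0 \<pi>0 R" and bRp: "bounded_on_supp d0 \<pi>0 Rp"
    using F_compact R_in p_in unfolding compact_supp_def Rp_def by auto
  obtain B1 where B1: "\<And>x a. x \<in> space d0 \<Longrightarrow> a \<in> topsupp (\<pi>0 x) \<Longrightarrow> \<bar>R x a\<bar> \<le> B1"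
    using bR unfolding bounded_on_supp_def bdd_above_def supp_pairs_def by fastforce
  obtain B2 where B2: "\<And>x a. x \<in> space d0 \<Longrightarrow> a \<in> topsupp (\<pi>0 x) \<Longrightarrow> \<bar>Rp x a\<bar> \<le> B2"
    using bRp unfolding bounded_on_supp_def bdd_above_def supp_pairs_def by fastforce
  define B where "B = max B1 B2"
  have hB: "\<And>x a. x \<in> space d0 \<Longrightarrow> a \<in> topsupp (\<pi>0 x) \<Longrightarrow> \<bar>R x a\<bar> \<le> B \<and> \<bar>Rp x a\<bar> \<le> B"
    using B1 B2 unfolding B_def by fastforce
  define Pi where "Pi x = PiM {..<K} (\<lambda>_. \<pi>0 x)" for x
  define h where "h S x as = (\<Sum>k<K. mnl K Rp x as k * logloss K (\<lambda>j. S x (as j)) k)" for S x as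
  have K0: "K > 0" using K2 by simp
  have kern: "Pi \<in> measurable d0 (subprob_algebra (PiM {..<K} (\<lambda>_. borel)))"
    unfolding Pi_def by (rule kernel_PiM[OF pi0_prob pi0_sets pi0_meas])
  have Piprob: "prob_space (Pi x)" if "x \<in> space d0" for x
    unfolding Pi_def using pi0_prob[OF that] by (intro prob_space_PiM) auto
  have sPi: "sets (Pi x) = sets (PiM {..<K} (\<lambda>_. borel))" if "x \<in> space d0" for x
    unfolding Pi_def using pi0_sets[OF that] by (intro sets_PiM_cong) auto
  have supAE: "AE as in Pi x. \<forall>j\<in>{..<K}. as j \<in> topsupp (\<pi>0 x)" if x: "x \<in> space d0" for x
    unfolding Pi_def
    by (intro AE_finite_allI AE_PiM_component pi0_prob[OF x] topsupp_AE pi0_sets[OF x]) auto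
  have gen: "integrable (Pi x) (h S x) \<and> 0 \<le> (\<integral>as. h S x as \<partial>Pi x) \<and> (\<integral>as. h S x as \<partial>Pi x) \<le> ln K + 2 * B"
    if Sm: "(\<lambda>(x, a). S x a) \<in> borel_measurable (d0 \<Otimes>\<^sub>M borel)"
      and Sb: "\<And>x a. x \<in> space d0 \<Longrightarrow> a \<in> topsupp (\<pi>0 x) \<Longrightarrow> \<bar>S x a\<bar> \<le> B"
      and x: "x \<in> space d0" for S x
  proof -
    interpret Px: prob_space "Pi x" by (rule Piprob[OF x])
    have hm: "(\<lambda>(x, as). h S x as) \<in> borel_measurable (d0 \<Otimes>\<^sub>M PiM {..<K} (\<lambda>_. borel))"
      unfolding h_def by (rule h_meas[OF Sm Rpm])
    have "h S x \<in> borel_measurable (PiM {..<K} (\<lambda>_. borel))"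
      using measurable_Pair2[OF hm x] by simp
    then have hm': "h S x \<in> borel_measurable (Pi x)"
      using measurable_cong_sets[OF sPi[OF x] refl] by metis
    have bnd: "AE as in Pi x. 0 \<le> h S x as \<and> h S x as \<le> ln K + 2 * B"
      using supAE[OF x]
    proof eventually_elim
      case (elim as)
      have "\<And>j. j < K \<Longrightarrow> \<bar>S x (as j)\<bar> \<le> B" using elim Sb[OF x] by auto
      from h_bound[OF K0 this, where u="\<lambda>j. Rp x (as j)"] show ?case
        by (simp add: h_def mnl_def)
    qed
    have int: "integrable (Pi x) (h S x)"
      by (rule Px.integrable_const_bound[where B="ln K + 2 * B"]) (use bnd hm' in auto)
    have "0 \<le> (\<integral>as. h S x as \<partial>Pi x)" using bnd by (intro integral_nonneg_AE) auto
    moreover have "(\<integral>as. h S x as \<partial>Pi x) \<le> (\<integral>as. ln K + 2 * B \<partial>Pi x)"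
      using bnd int by (intro integral_mono_AE) auto
    ultimately show ?thesis using int by (simp add: Px.prob_space)
  qed
  have hmR: "(\<lambda>(x, as). h R x as) \<in> borel_measurable (d0 \<Otimes>\<^sub>M PiM {..<K} (\<lambda>_. borel))"
    unfolding h_def by (rule h_meas[OF Rm Rpm])
  have hmRp: "(\<lambda>(x, as). h Rp x as) \<in> borel_measurable (d0 \<Otimes>\<^sub>M PiM {..<K} (\<lambda>_. borel))"
    unfolding h_def by (rule h_meas[OF Rpm Rpm])
  have gR: "integrable (Pi x) (h R x) \<and> 0 \<le> (\<integral>as. h R x as \<partial>Pi x) \<and> (\<integral>as. h R x as \<partial>Pi x) \<le> ln K + 2 * B"
    if "x \<in> space d0" for x using gen[OF Rm _ that] hB by blast
  have gRp: "integrable (Pi x) (h Rp x) \<and> 0 \<le> (\<integral>as. h Rp x as \<partial>Pi x) \<and> (\<integral>as. h Rp x as \<partial>Pi x) \<le> ln K + 2 * B"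
    if "x \<in> space d0" for x using gen[OF Rpm _ that] hB by blast
  have mR: "(\<lambda>x. \<integral>as. h R x as \<partial>Pi x) \<in> borel_measurable d0"
    using integral_kernel_measurable[OF hmR kern] gR by blast
  have mRp: "(\<lambda>x. \<integral>as. h Rp x as \<partial>Pi x) \<in> borel_measurable d0"
    using integral_kernel_measurable[OF hmRp kern] gRp by blast
  have iR: "integrable d0 (\<lambda>x. \<integral>as. h R x as \<partial>Pi x)"
    by (rule d0.integrable_const_bound[where B="ln K + 2 * B"]) (use mR gR in auto)
  have iRp: "integrable d0 (\<lambda>x. \<integral>as. h Rp x as \<partial>Pi x)"
    by (rule d0.integrable_const_bound[where B="ln K + 2 * B"]) (use mRp gRp in auto)
  define g where "g x = (\<integral>as. h R x as \<partial>Pi x) - (\<integral>as. h Rp x as \<partial>Pi x)" for x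
  have ig: "integrable d0 g" unfolding g_def using iR iRp by auto
  have pl: "pop_loss K d0 \<pi>0 (Rf p) S = (\<integral>x. (\<integral>as. h S x as \<partial>Pi x) \<partial>d0)" for S
    unfolding pop_loss_def h_def Pi_def Rp_def ..
  have "(\<integral>x. g x \<partial>d0) = 0"
    unfolding g_def using iR iRp loss_eq by (simp add: pl Rp_def)
  have gdiff: "g x = (\<integral>as. h R x as - h Rp x as \<partial>Pi x)" if "x \<in> space d0" for x
    unfolding g_def using gR[OF that] gRp[OF that] by simp
  have gap0: "0 \<le> h R x as - h Rp x as" for x as
    using gibbs(1)[OF K0, where u="\<lambda>j. Rp x (as j)" and v="\<lambda>j. R x (as j)"]
    by (simp add: h_def mnl_def)
  have gnn: "AE x in d0. 0 \<le> g x"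
  proof (rule AE_I2)
    fix x assume x: "x \<in> space d0"
    have "0 \<le> (\<integral>as. h R x as - h Rp x as \<partial>Pi x)" by (intro integral_nonneg_AE AE_I2 gap0)
    then show "0 \<le> g x" using gdiff[OF x] by simp
  qed
  have g0: "AE x in d0. g x = 0"
    using integral_nonneg_eq_0_iff_AE[OF ig gnn] \<open>(\<integral>x. g x \<partial>d0) = 0\<close> by simp
  have ctRp: "AE x in d0. continuous_on (topsupp (\<pi>0 x)) (Rp x)"
    using F_cont[of Rp] p_in by (simp add: Rp_def)
  have main: "AE x in d0. \<forall>a \<in> topsupp (\<pi>0 x). R x a = Rp x a"
    using g0 F_cont[OF R_in] ctRp AE_space
  proof eventually_elim
    case (elim x)
    then have x: "x \<in> space d0" and gx: "g x = 0" by auto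
    interpret Px: prob_space "Pi x" by (rule Piprob[OF x])
    have idf: "integrable (Pi x) (\<lambda>as. h R x as - h Rp x as)" using gR[OF x] gRp[OF x] by auto
    have "AE as in Pi x. h R x as - h Rp x as = 0"
      using integral_nonneg_eq_0_iff_AE[OF idf] gx gdiff[OF x] gap0 by simp
    then have ae: "AE as in PiM {..<K} (\<lambda>_. \<pi>0 x). R x (as 1) - Rp x (as 1) = R x (as 0) - Rp x (as 0)"
      unfolding Pi_def
    proof eventually_elim
      case (elim as)
      then show ?case
        using gibbs(2)[OF K0, where u="\<lambda>j. Rp x (as j)" and v="\<lambda>j. R x (as j)" and k=1] K2
        by (simp add: h_def mnl_def Pi_def)
    qed
    have Rxm: "R x \<in> borel_measurable borel" using measurable_Pair2[OF Rm x] by simp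
    have Rpxm: "Rp x \<in> borel_measurable borel" using measurable_Pair2[OF Rpm x] by simp
    show ?case
      by (rule fiber[OF pi0_prob[OF x] pi0_sets[OF x] Rxm Rpxm hB[OF x] cR[OF x] cRp[OF x] _ _ K2 ae])
         (use elim in auto)
  qed
  have "regret tb d0 \<pi>0 Rp R = 0"
    unfolding regret_def
  proof (rule integral_eq_zero_AE)
    show "AE x in d0. Rp x (sel tb \<pi>0 Rp x) - Rp x (sel tb \<pi>0 R x) = 0"
      using main
    proof eventually_elim
      case (elim x)
      then have "argmax_supp \<pi>0 R x = argmax_supp \<pi>0 Rp x"
        unfolding argmax_supp_def by auto
      then show ?case by (simp add: sel_def)
    qed
  qed
  then show ?thesis using main by (simp add: Rp_def)
qed

end
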